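(* Let $\gamma$ be a smooth, convex closed curve in the Euclidean plane with curvature $\kappa>0$, which is a Gutkin curve with contact angle $\alpha$, and let $x(t),y(t)$ be the corresponding chord parameterizations, where $x,y$ denote arc-length coordinates on $\gamma$ and $'$ denotes $d/dt$. Then along this family of chords $\kappa(x(t))\,x'(t)=\kappa(y(t))\,y'(t)$; equivalently, if the parameter $t$ is chosen so that $x'(t)=a/\kappa(x(t))$ for a constant $a$, then also $y'(t)=a/\kappa(y(t))$, so that the values of this parameter at the two endpoints of each chord differ by a constant.
   Context: A smooth convex oriented closed curve $C$ in $\mathbb{E}^2$ is a Gutkin curve with contact angle $\alpha\in(0,\pi]$ if there are parameterizations $x(t),y(t)$ of $C$ with $x'(t),y'(t)>0$, $x(t)\neq y(t)$, such that for every $t$ the angle at $x(t)$ between the positively oriented tangent of $C$ and the chord direction towards $y(t)$, and the angle at $y(t)$ between the chord direction (from $x(t)$ towards $y(t)$) and the positively oriented tangent of $C$, both equal $\alpha$. *)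

theory Defs
  imports "HOL-Analysis.Analysis"
begin

text \<open>The Euclidean plane is modelled by the complex numbers.\<close>

definition vderiv :: "(real \<Rightarrow> complex) \<Rightarrow> real \<Rightarrow> complex" where
  "vderiv f = (\<lambda>s. vector_derivative f (at s))"

definition smooth_plane_curve :: "(real \<Rightarrow> complex) \<Rightarrow> bool" where
  "smooth_plane_curve g \<longleftrightarrow> (\<forall>n s. ((vderiv ^^ n) g) differentiable (at s))"

definition vec_angle :: "complex \<Rightarrow> complex \<Rightarrow> real" where
  "vec_angle u v = arccos (inner u v / (norm u * norm v))"

text \<open>Signed curvature of a planar curve parameterized by arc length
  (counterclockwise turning is positive).\<close>
definition curvature :: "(real \<Rightarrow> complex) \<Rightarrow> real \<Rightarrow> real" where
  "curvature g s = Im (cnj (vderiv g s) * vderiv (vderiv g) s)"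

definition convex_arclength_curve :: "(real \<Rightarrow> complex) \<Rightarrow> real \<Rightarrow> bool" where
  "convex_arclength_curve g L \<longleftrightarrow>
     L > 0 \<and> smooth_plane_curve g \<and>
     (\<forall>s. g (s + L) = g s) \<and>
     inj_on g {0..<L} \<and>
     (\<forall>s. norm (vderiv g s) = 1) \<and>
     (\<exists>K. convex K \<and> compact K \<and> interior K \<noteq> {} \<and> g ` {0..L} = frontier K)"

definition gutkin_pair ::
  "(real \<Rightarrow> complex) \<Rightarrow> real \<Rightarrow> (real \<Rightarrow> real) \<Rightarrow> (real \<Rightarrow> real) \<Rightarrow> bool" where
  "gutkin_pair g \<alpha> x y \<longleftrightarrow>
     0 < \<alpha> \<and> \<alpha> \<le> pi \<and>
     (\<forall>t. x differentiable (at t) \<and> y differentiable (at t)) \<and>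
     (\<forall>t. deriv x t > 0 \<and> deriv y t > 0) \<and>
     g ` range x = range g \<and> g ` range y = range g \<and>
     (\<forall>t. g (x t) \<noteq> g (y t)) \<and>
     (\<forall>t. vec_angle (vderiv g (x t)) (g (y t) - g (x t)) = \<alpha>) \<and>
     (\<forall>t. vec_angle (g (y t) - g (x t)) (vderiv g (y t)) = \<alpha>)"

end

theory Submission
  imports Defs
begin

lemma unit_re_finite: "finite {z::complex. Re z = c \<and> norm z = 1}"
proof -
  have "{z::complex. Re z = c \<and> norm z = 1} \<subseteq> {Complex c (sqrt (1 - c^2)), Complex c (- sqrt (1 - c^2))}"
  proof
    fix z :: complex assume "z \<in> {z. Re z = c \<and> norm z = 1}"
    then have r: "Re z = c" and n: "norm z = 1" by auto
    have "Re z ^ 2 + Im z ^ 2 = 1" using n by (simp add: cmod_def)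
    then have "Im z ^ 2 = 1 - c^2" using r by simp
    then have "\<bar>Im z\<bar> = sqrt (1 - c^2)" using real_sqrt_abs[of "Im z"] by simp
    then have "Im z = sqrt (1 - c^2) \<or> Im z = - sqrt (1 - c^2)"
      by (cases "Im z \<ge> 0") auto
    then show "z \<in> {Complex c (sqrt (1 - c^2)), Complex c (- sqrt (1 - c^2))}"
      using r by (auto simp: complex_eq_iff)
  qed
  then show ?thesis by (rule finite_subset) simp
qed

lemma deriv_zero_finite_values:
  fixes w :: "real \<Rightarrow> complex"
  assumes d: "(w has_vector_derivative D) (at t0)"
    and F: "finite F" and inF: "\<And>t. w t \<in> F"
  shows "D = 0"
proof -
  have c: "isCont w t0" using d by (rule has_vector_derivative_continuous)
  let ?U = "- (F - {w t0})"
  have "open ?U" using F by (intro open_Compl finite_imp_closed) auto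
  moreover have "w t0 \<in> ?U" by simp
  ultimately have "eventually (\<lambda>t. w t \<in> ?U) (at t0)"
    using topological_tendstoD[OF c[unfolded isCont_def]] by blast
  then obtain e where e: "e > 0" "\<And>t. t \<noteq> t0 \<Longrightarrow> dist t t0 < e \<Longrightarrow> w t \<in> ?U"
    unfolding eventually_at by auto
  have eq: "(\<lambda>_. w t0) t = w t" if "dist t t0 < e" for t
    using e(2)[of t] inF[of t] that by (cases "t = t0") auto
  have "((\<lambda>_. w t0) has_vector_derivative 0) (at t0)" by simp
  then have "(w has_vector_derivative 0) (at t0 within UNIV)"
    using has_vector_derivative_transform_within[OF _ e(1), of "\<lambda>_. w t0" 0 t0 UNIV w] eq by auto
  then show ?thesis using d vector_derivative_unique_at by auto
qed

lemma cos_from_angle: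
  assumes "vec_angle u v = \<alpha>" "u \<noteq> 0" "v \<noteq> 0"
  shows "inner u v / (norm u * norm v) = cos \<alpha>"
proof -
  have "\<bar>inner u v\<bar> \<le> norm u * norm v" by (rule Cauchy_Schwarz_ineq2)
  then have "-1 \<le> inner u v / (norm u * norm v) \<and> inner u v / (norm u * norm v) \<le> 1"
    using assms by (auto simp: divide_simps abs_le_iff)
  then show ?thesis using assms(1) unfolding vec_angle_def by (auto simp: cos_arccos)
qed

theorem mainTheorem3:
  fixes g :: "real \<Rightarrow> complex" and L \<alpha> :: real and x y :: "real \<Rightarrow> real"
  assumes "convex_arclength_curve g L"
    and "\<forall>s. curvature g s > 0"
    and "gutkin_pair g \<alpha> x y"
  shows "(\<forall>t. curvature g (x t) * deriv x t = curvature g (y t) * deriv y t) \<and>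
         (\<forall>a. (\<forall>t. deriv x t = a / curvature g (x t)) \<longrightarrow>
              (\<forall>t. deriv y t = a / curvature g (y t)))"
proof -
  have sm: "smooth_plane_curve g" and un: "\<And>s. norm (vderiv g s) = 1"
    using assms(1) unfolding convex_arclength_curve_def by auto
  have gp: "\<And>t. x differentiable (at t)" "\<And>t. y differentiable (at t)"
    "\<And>t. g (x t) \<noteq> g (y t)"
    "\<And>t. vec_angle (vderiv g (x t)) (g (y t) - g (x t)) = \<alpha>"
    "\<And>t. vec_angle (g (y t) - g (x t)) (vderiv g (y t)) = \<alpha>"
    using assms(3) unfolding gutkin_pair_def by auto
  define G where "G = vderiv g"
  have hG: "\<And>s. (G has_vector_derivative vderiv G s) (at s)"
  proof -
    fix s
    have "((vderiv ^^ 1) g) differentiable (at s)" using sm unfolding smooth_plane_curve_def by blast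
    then have "G differentiable (at s)" by (simp add: G_def)
    then show "(G has_vector_derivative vderiv G s) (at s)"
      unfolding vderiv_def by (simp add: vector_derivative_works[symmetric])
  qed
  have hder: "\<And>z t. z differentiable (at t) \<Longrightarrow>
      ((G \<circ> z) has_vector_derivative (deriv z t *\<^sub>R vderiv G (z t))) (at t)"
  proof -
    fix z :: "real \<Rightarrow> real" and t assume "z differentiable (at t)"
    then have "(z has_real_derivative deriv z t) (at t)"
      by (simp add: DERIV_deriv_iff_real_differentiable)
    then have "(z has_vector_derivative deriv z t) (at t)"
      by (simp add: has_real_derivative_iff_has_vector_derivative)
    then show "((G \<circ> z) has_vector_derivative (deriv z t *\<^sub>R vderiv G (z t))) (at t)"
      using vector_diff_chain_at hG by blast
  qed
  define S where "S = {z::complex. Re z = cos \<alpha> \<and> norm z = 1}"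
  define F where "F = (\<lambda>(a,b). a * b) ` (S \<times> S)"
  have finF: "finite F" unfolding F_def S_def using unit_re_finite by auto
  define w where "w = (\<lambda>t. cnj (G (x t)) * G (y t))"
  have winF: "w t \<in> F" for t
  proof -
    let ?c = "g (y t) - g (x t)"
    have cn: "?c \<noteq> 0" using gp(3)[of t] by auto
    have n1: "norm (G (x t)) = 1" "norm (G (y t)) = 1" using un by (auto simp: G_def)
    then have nz: "G (x t) \<noteq> 0" "G (y t) \<noteq> 0" by auto
    define u where "u = ?c / of_real (norm ?c)"
    have nu: "norm u = 1" using cn by (simp add: u_def norm_divide)
    define z1 where "z1 = cnj (G (x t)) * u"
    define z2 where "z2 = cnj u * G (y t)"
    have a1: "inner (G (x t)) ?c / (norm (G (x t)) * norm ?c) = cos \<alpha>"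
      using cos_from_angle[OF gp(4)[of t, folded G_def] nz(1) cn] .
    have a2: "inner ?c (G (y t)) / (norm ?c * norm (G (y t))) = cos \<alpha>"
      using cos_from_angle[OF gp(5)[of t, folded G_def] cn nz(2)] .
    have "Re z1 = cos \<alpha>" using a1 n1 cn
      by (simp add: z1_def u_def inner_complex_def Re_divide_of_real add_divide_distrib)
    moreover have "norm z1 = 1" using n1 nu by (simp add: z1_def norm_mult)
    moreover have "Re z2 = cos \<alpha>" using a2 n1 cn
      by (simp add: z2_def u_def inner_complex_def Re_divide_of_real add_divide_distrib diff_divide_distrib algebra_simps)
    moreover have "norm z2 = 1" using n1 nu by (simp add: z2_def norm_mult)
    moreover have "w t = z1 * z2"
    proof -
      have "of_real ((norm u)^2) = u * cnj u" by (rule complex_norm_square)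
      then have uu: "u * cnj u = 1" using nu by simp
      have "z1 * z2 = cnj (G (x t)) * G (y t) * (u * cnj u)"
        by (simp add: z1_def z2_def algebra_simps)
      then show ?thesis using uu by (simp add: w_def)
    qed
    ultimately show ?thesis unfolding F_def S_def by auto
  qed
  have key: "curvature g (x t) * deriv x t = curvature g (y t) * deriv y t" for t
  proof -
    define D1 where "D1 = deriv x t *\<^sub>R vderiv G (x t)"
    define D2 where "D2 = deriv y t *\<^sub>R vderiv G (y t)"
    have d1: "((\<lambda>t. G (x t)) has_vector_derivative D1) (at t)"
      using hder[OF gp(1)] by (simp add: D1_def o_def)
    have d2: "((\<lambda>t. G (y t)) has_vector_derivative D2) (at t)"
      using hder[OF gp(2)] by (simp add: D2_def o_def)
    have dw: "(w has_vector_derivative (cnj (G (x t)) * D2 + cnj D1 * G (y t))) (at t)"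
      unfolding w_def by (intro has_vector_derivative_mult has_vector_derivative_cnj d1 d2)
    have D0: "cnj (G (x t)) * D2 + cnj D1 * G (y t) = 0"
      by (rule deriv_zero_finite_values[OF dw finF winF])
    have e1: "G (x t) * cnj (G (x t)) = 1" "G (y t) * cnj (G (y t)) = 1"
      using complex_norm_square[of "G (x t)"] complex_norm_square[of "G (y t)"] un
      unfolding G_def by simp_all
    have "cnj (w t) * (cnj (G (x t)) * D2 + cnj D1 * G (y t))
        = (G (x t) * cnj (G (x t))) * (cnj (G (y t)) * D2)
          + (G (y t) * cnj (G (y t))) * (G (x t) * cnj D1)"
      unfolding w_def by (simp add: algebra_simps)
    also have "\<dots> = cnj (G (y t)) * D2 + cnj (cnj (G (x t)) * D1)"
      using e1 by simp
    finally have "Im (cnj (G (y t)) * D2 + cnj (cnj (G (x t)) * D1)) = 0"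
      using D0 by simp
    then have "deriv y t * curvature g (y t) - deriv x t * curvature g (x t) = 0"
      unfolding D1_def D2_def curvature_def G_def
      by (simp add: scaleR_conv_of_real algebra_simps)
    then show ?thesis by (simp add: algebra_simps)
  qed
  show ?thesis
  proof (intro conjI allI impI)
    fix t show "curvature g (x t) * deriv x t = curvature g (y t) * deriv y t" by (rule key)
  next
    fix a t assume h: "\<forall>t. deriv x t = a / curvature g (x t)"
    have k1: "curvature g (x t) \<noteq> 0" "curvature g (y t) \<noteq> 0" using assms(2)
      by (metis less_irrefl)+
    have "curvature g (x t) * deriv x t = a" using h k1 by simp
    then have "curvature g (y t) * deriv y t = a" using key by simp
    then show "deriv y t = a / curvature g (y t)" using k1
      by (simp add: field_simps)
  qed
qed

end
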